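(* Let $M_{\mathcal X}>0$, $M_{\mathcal Y}>0$, $\kappa_t>0$, $\sigma_t>0$ for $t\in\mathcal T$, and $r=\sum_{t\in\mathcal T}\kappa_t/\sigma_t$. Consider the two-player game in which $\mathcal X$ chooses $\boldsymbol X\in\mathbb R^T_{\ge0}$ with $\sum_t\kappa_tX_t=M_{\mathcal X}$ and receives $\pi^*_{\mathrm{WL}}(\boldsymbol X,\boldsymbol Y)$, while $\mathcal Y$ chooses $\boldsymbol Y\in\mathbb R^T_{\ge0}$ with $\sum_t\sigma_tY_t=M_{\mathcal Y}$ and receives $1-\pi^*_{\mathrm{WL}}(\boldsymbol X,\boldsymbol Y)$. Then the equilibrium investment profile is $$X^*_t=\frac{M_{\mathcal X}}{\kappa_t}\cdot\frac{\kappa_t/\sigma_t}{r},\qquad Y^*_t=\frac{M_{\mathcal Y}}{\sigma_t}\cdot\frac{\kappa_t/\sigma_t}{r},\qquad t\in\mathcal T,$$ and the equilibrium payoffs are $\pi^*_{\mathrm{WL}}(\boldsymbol X^*,\boldsymbol Y^* )=L\big(\frac{M_{\mathcal Y}}{M_{\mathcal X}}r\big)$ for $\mathcal X$ and $1-L\big(\frac{M_{\mathcal Y}}{M_{\mathcal X}}r\big)$ for $\mathcal Y$.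
   Context: $\mathcal T=\{1,\dots,T\}$, $T\ge1$. The function $L:[0,\infty]\to[0,1]$ is $L(\alpha)=1-\alpha/2$ if $\alpha\le1$, $L(\alpha)=1/(2\alpha)$ if $1<\alpha<\infty$, $L(\infty)=0$. For $\boldsymbol X,\boldsymbol Y\in\mathbb R^T_{\ge0}$, $\alpha(\boldsymbol X,\boldsymbol Y)=\sum_tY_t/X_t\in[0,\infty]$, where a term with $Y_t=0$ equals $0$ and a term with $X_t=0<Y_t$ equals $+\infty$; $\pi^*_{\mathrm{WL}}(\boldsymbol X,\boldsymbol Y)=L(\alpha(\boldsymbol X,\boldsymbol Y))$. An equilibrium is a feasible pair from which neither player can strictly improve its own payoff by a unilateral feasible deviation. *)

theory Defs
  imports "HOL-Analysis.Analysis"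
begin

text \<open>Index set is {1..T}; vectors are functions nat \<Rightarrow> real, only values on {1..T} matter.\<close>

definition Lfun :: "ereal \<Rightarrow> real" where
  "Lfun a = (if a \<le> 1 then 1 - real_of_ereal a / 2
             else if a = \<infinity> then 0 else 1 / (2 * real_of_ereal a))"

definition alpha :: "nat \<Rightarrow> (nat \<Rightarrow> real) \<Rightarrow> (nat \<Rightarrow> real) \<Rightarrow> ereal" where
  "alpha T X Y = (\<Sum>t\<in>{1..T}. if Y t = 0 then 0 else if X t = 0 then \<infinity> else ereal (Y t / X t))"

definition piWL :: "nat \<Rightarrow> (nat \<Rightarrow> real) \<Rightarrow> (nat \<Rightarrow> real) \<Rightarrow> real" where
  "piWL T X Y = Lfun (alpha T X Y)"

definition feasible :: "nat \<Rightarrow> (nat \<Rightarrow> real) \<Rightarrow> real \<Rightarrow> (nat \<Rightarrow> real) \<Rightarrow> bool" where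
  "feasible T c M Z \<longleftrightarrow> (\<forall>t\<in>{1..T}. Z t \<ge> 0) \<and> (\<Sum>t\<in>{1..T}. c t * Z t) = M"

definition is_equilibrium ::
  "nat \<Rightarrow> (nat \<Rightarrow> real) \<Rightarrow> (nat \<Rightarrow> real) \<Rightarrow> real \<Rightarrow> real \<Rightarrow> (nat \<Rightarrow> real) \<Rightarrow> (nat \<Rightarrow> real) \<Rightarrow> bool" where
  "is_equilibrium T \<kappa> \<sigma> MX MY X Y \<longleftrightarrow>
     feasible T \<kappa> MX X \<and> feasible T \<sigma> MY Y \<and>
     (\<forall>X'. feasible T \<kappa> MX X' \<longrightarrow> piWL T X' Y \<le> piWL T X Y) \<and>
     (\<forall>Y'. feasible T \<sigma> MY Y' \<longrightarrow> 1 - piWL T X Y' \<le> 1 - piWL T X Y)"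

end

theory Submission
  imports Defs
begin

lemma Lfun_ereal: "Lfun (ereal x) = (if x \<le> 1 then 1 - x/2 else 1/(2*x))"
  by (simp add: Lfun_def)

lemma Lfun_inf: "Lfun \<infinity> = 0"
  by (simp add: Lfun_def)

lemma Lfun_strict:
  assumes "0 \<le> a" "a < b" shows "Lfun b < Lfun a"
proof -
  obtain x where x: "a = ereal x" using assms by (cases a) auto
  have x0: "x \<ge> 0" using assms x by simp
  show ?thesis
  proof (cases b)
    case (real y)
    have "x < y" using assms x real by simp
    have "x \<le> 1 \<Longrightarrow> 1 < y \<Longrightarrow> 1 + x * y < y * 2"
    proof -
      assume h: "x \<le> 1" "1 < y"
      have "x*y \<le> y" using mult_right_mono[of x 1 y] h by simp
      then show ?thesis using h by linarith
    qed
    then show ?thesis using \<open>x<y\<close> x real x0 by (auto simp: Lfun_ereal field_simps)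
  next
    case PInf
    then show ?thesis using x x0 by (auto simp: Lfun_ereal Lfun_inf)
  next
    case MInf then show ?thesis using assms by simp
  qed
qed

lemma Lfun_mono:
  assumes "0 \<le> a" "a \<le> b" shows "Lfun b \<le> Lfun a"
  using Lfun_strict[OF assms(1)] assms(2) by (cases "a = b") (auto simp: order_le_less)

lemma alpha_nonneg:
  assumes "\<forall>t\<in>{1..T}. X t \<ge> 0 \<and> Y t \<ge> 0" shows "alpha T X Y \<ge> 0"
  unfolding alpha_def by (rule sum_nonneg) (use assms in auto)

lemma alpha_fin:
  assumes "\<forall>t\<in>{1..T}. Y t \<noteq> 0 \<longrightarrow> X t \<noteq> 0"
  shows "alpha T X Y = ereal (\<Sum>t\<in>{1..T}. Y t / X t)"
proof -
  have "alpha T X Y = (\<Sum>t\<in>{1..T}. ereal (Y t / X t))"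
    unfolding alpha_def by (rule sum.cong) (use assms in auto)
  also have "\<dots> = ereal (\<Sum>t\<in>{1..T}. Y t / X t)" by simp
  finally show ?thesis .
qed

lemma alpha_inf:
  assumes "\<forall>t\<in>{1..T}. X t \<ge> 0 \<and> Y t \<ge> 0" "s \<in> {1..T}" "Y s \<noteq> 0" "X s = 0"
  shows "alpha T X Y = \<infinity>"
proof -
  let ?f = "\<lambda>t. if Y t = 0 then 0 else if X t = 0 then \<infinity> else ereal (Y t / X t)"
  have fs: "?f s = \<infinity>" using assms by simp
  have ge: "sum ?f ({1..T} - {s}) \<ge> 0"
    by (rule sum_nonneg) (use assms in auto)
  have "sum ?f {1..T} = ?f s + sum ?f ({1..T} - {s})"
    by (rule sum.remove) (use assms in auto)
  then show ?thesis using fs ge unfolding alpha_def by simp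
qed


lemma sq_bound:
  fixes u w c :: real assumes "w > 0" shows "2*c*u - c^2*w \<le> u^2/w"
proof -
  have "0 \<le> (u - c*w)^2" by simp
  then have "2*c*u*w - c^2*w*w \<le> u^2" by (simp add: power2_eq_square algebra_simps)
  then show ?thesis using assms by (simp add: field_simps power2_eq_square)
qed

lemma sqrt_k1:
  fixes k y :: real assumes "k > 0" shows "k * sqrt (y/k) = sqrt (k*y)"
proof -
  have e: "k = sqrt (k^2)" using assms by simp
  have "k * sqrt (y/k) = sqrt (k^2 * (y/k))" by (subst e) (simp only: real_sqrt_mult)
  also have "k^2 * (y/k) = k*y" using assms by (simp add: power2_eq_square)
  finally show ?thesis .
qed

lemma sqrt_k2:
  fixes k y :: real assumes "k > 0" "y \<ge> 0" shows "y / sqrt (y/k) = sqrt (k*y)"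
proof (cases "y = 0")
  case True then show ?thesis by simp
next
  case False
  have e: "y = sqrt (y^2)" using assms by simp
  have "y / sqrt (y/k) = sqrt (y^2 / (y/k))" by (subst e) (simp only: real_sqrt_divide)
  also have "y^2 / (y/k) = k*y" using assms False by (simp add: power2_eq_square)
  finally show ?thesis .
qed

theorem lemma1:
  fixes T :: nat and \<kappa> \<sigma> :: "nat \<Rightarrow> real" and MX MY r :: real
    and Xs Ys :: "nat \<Rightarrow> real"
  assumes "T \<ge> 1" and "MX > 0" and "MY > 0"
    and "\<forall>t\<in>{1..T}. \<kappa> t > 0" and "\<forall>t\<in>{1..T}. \<sigma> t > 0"
    and "r = (\<Sum>t\<in>{1..T}. \<kappa> t / \<sigma> t)"
    and "Xs = (\<lambda>t. MX / \<kappa> t * ((\<kappa> t / \<sigma> t) / r))"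
    and "Ys = (\<lambda>t. MY / \<sigma> t * ((\<kappa> t / \<sigma> t) / r))"
  shows "is_equilibrium T \<kappa> \<sigma> MX MY Xs Ys
    \<and> (\<forall>X Y. is_equilibrium T \<kappa> \<sigma> MX MY X Y \<longrightarrow> (\<forall>t\<in>{1..T}. X t = Xs t \<and> Y t = Ys t))
    \<and> piWL T Xs Ys = Lfun (ereal (MY / MX * r))
    \<and> 1 - piWL T Xs Ys = 1 - Lfun (ereal (MY / MX * r))"
proof -
  note T1 = assms(1) and MXp = assms(2) and MYp = assms(3)
  note kp = assms(4) and sp = assms(5) and r_def = assms(6)
  define I where "I = {1..T}"
  have finI: "finite I" and neI: "I \<noteq> {}" using T1 by (auto simp: I_def)
  have kpI: "\<And>t. t \<in> I \<Longrightarrow> \<kappa> t > 0" using kp by (simp add: I_def)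
  have spI: "\<And>t. t \<in> I \<Longrightarrow> \<sigma> t > 0" using sp by (simp add: I_def)
  have rI: "r = (\<Sum>t\<in>I. \<kappa> t / \<sigma> t)" using r_def by (simp add: I_def)
  have rp: "r > 0" unfolding rI
    by (rule sum_pos[OF finI neI]) (simp add: kpI spI)
  define v where "v = MY / MX * r"
  have vp: "v > 0" using MXp MYp rp by (simp add: v_def)
  have Xs_eq: "Xs t = MX / (\<sigma> t * r)" if t: "t \<in> I" for t
    using assms(7) kpI[OF t] spI[OF t] rp by (simp add: field_simps)
  have Ys_eq: "Ys t = MY * \<kappa> t / (\<sigma> t * \<sigma> t * r)" if t: "t \<in> I" for t
    using assms(8) kpI[OF t] spI[OF t] rp by (simp add: field_simps)
  have Xsp: "\<And>t. t \<in> I \<Longrightarrow> Xs t > 0" using Xs_eq MXp spI rp by simp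
  have Ysp: "\<And>t. t \<in> I \<Longrightarrow> Ys t > 0" using Ys_eq MYp spI kpI rp by simp
  have featXs: "feasible T \<kappa> MX Xs"
  proof -
    have "(\<Sum>t\<in>I. \<kappa> t * Xs t) = (\<Sum>t\<in>I. (MX/r) * (\<kappa> t / \<sigma> t))"
      by (rule sum.cong) (use Xs_eq spI in \<open>auto simp: mult.commute\<close>)
    also have "\<dots> = (MX/r) * r" by (simp only: sum_distrib_left[symmetric] rI[symmetric])
    also have "\<dots> = MX" using rp by simp
    finally show ?thesis unfolding feasible_def using Xsp by (auto simp: I_def less_imp_le)
  qed
  have featYs: "feasible T \<sigma> MY Ys"
  proof -
    have "(\<Sum>t\<in>I. \<sigma> t * Ys t) = (\<Sum>t\<in>I. (MY/r) * (\<kappa> t / \<sigma> t))"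
      by (rule sum.cong) (use Ys_eq spI in \<open>auto simp: field_simps\<close>)
    also have "\<dots> = (MY/r) * r" by (simp only: sum_distrib_left[symmetric] rI[symmetric])
    also have "\<dots> = MY" using rp by simp
    finally show ?thesis unfolding feasible_def using Ysp by (auto simp: I_def less_imp_le)
  qed
  have alpha_Xs: "alpha T Xs Y = ereal v" if fY: "feasible T \<sigma> MY Y" for Y
  proof -
    have "alpha T Xs Y = ereal (\<Sum>t\<in>I. Y t / Xs t)"
      unfolding I_def by (rule alpha_fin) (use Xsp in \<open>fastforce simp: I_def\<close>)
    also have "(\<Sum>t\<in>I. Y t / Xs t) = (\<Sum>t\<in>I. (r/MX) * (\<sigma> t * Y t))"
      by (rule sum.cong) (use Xs_eq spI MXp rp in auto)
    also have "\<dots> = (r/MX) * (\<Sum>t\<in>I. \<sigma> t * Y t)" by (simp only: sum_distrib_left[symmetric])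
    also have "\<dots> = v" using fY unfolding feasible_def I_def by (simp add: v_def)
    finally show ?thesis .
  qed
  have alpha_Ys: "ereal v \<le> alpha T X Ys" if fX: "feasible T \<kappa> MX X" for X
  proof (cases "\<exists>s\<in>I. X s = 0")
    case True
    then obtain s where s: "s \<in> I" "X s = 0" by blast
    have "alpha T X Ys = \<infinity>"
    proof (rule alpha_inf[of T X Ys s])
      show "\<forall>t\<in>{1..T}. 0 \<le> X t \<and> 0 \<le> Ys t" using fX Ysp by (auto simp: feasible_def I_def less_imp_le)
      show "s \<in> {1..T}" using s by (simp add: I_def)
      show "Ys s \<noteq> 0" using Ysp[OF s(1)] by simp
      show "X s = 0" by (rule s(2))
    qed
    then show ?thesis by simp
  next
    case False
    have Xp: "\<And>t. t \<in> I \<Longrightarrow> X t > 0" using False fX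
      by (force simp: feasible_def I_def order_le_less)
    have "alpha T X Ys = ereal (\<Sum>t\<in>I. Ys t / X t)"
      unfolding I_def by (rule alpha_fin) (use Xp in \<open>fastforce simp: I_def\<close>)
    moreover have "v \<le> (\<Sum>t\<in>I. Ys t / X t)"
    proof -
      define c where "c = r / MX"
      have termb: "(MY/r) * (2*c*(\<kappa> t/\<sigma> t) - c^2*(\<kappa> t * X t)) \<le> Ys t / X t"
        if t: "t \<in> I" for t
      proof -
        have w: "\<kappa> t * X t > 0" using kpI[OF t] Xp[OF t] by simp
        have "Ys t / X t = (MY/r) * ((\<kappa> t/\<sigma> t)^2 / (\<kappa> t * X t))"
          using Ys_eq[OF t] kpI[OF t] spI[OF t] Xp[OF t] rp
          by (simp add: field_simps power2_eq_square)
        moreover have "2*c*(\<kappa> t/\<sigma> t) - c^2*(\<kappa> t * X t) \<le> (\<kappa> t/\<sigma> t)^2 / (\<kappa> t * X t)"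
          by (rule sq_bound[OF w])
        moreover have "MY/r \<ge> 0" using MYp rp by simp
        ultimately show ?thesis by (metis mult_left_mono)
      qed
      have "(\<Sum>t\<in>I. (MY/r) * (2*c*(\<kappa> t/\<sigma> t) - c^2*(\<kappa> t * X t)))
          = (MY/r) * ((2*c) * (\<Sum>t\<in>I. \<kappa> t/\<sigma> t) - c^2*(\<Sum>t\<in>I. \<kappa> t * X t))"
        by (simp only: sum_distrib_left[symmetric] sum_subtractf)
      also have "\<dots> = (MY/r) * (2*c*r - c^2 * MX)"
      proof -
        have "(\<Sum>t\<in>I. \<kappa> t * X t) = MX" using fX by (simp add: feasible_def I_def)
        then show ?thesis using rI by simp
      qed
      also have "\<dots> = v" using MXp rp by (simp add: c_def v_def field_simps power2_eq_square)
      finally have "v = (\<Sum>t\<in>I. (MY/r) * (2*c*(\<kappa> t/\<sigma> t) - c^2*(\<kappa> t * X t)))" by simp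
      also have "\<dots> \<le> (\<Sum>t\<in>I. Ys t / X t)" by (rule sum_mono) (rule termb)
      finally show ?thesis .
    qed
    ultimately show ?thesis by simp
  qed
  have v0: "ereal v \<ge> 0" using vp by simp
  have valXY: "piWL T Xs Ys = Lfun (ereal v)" unfolding piWL_def using alpha_Xs[OF featYs] by simp
  have eq1: "is_equilibrium T \<kappa> \<sigma> MX MY Xs Ys"
    unfolding is_equilibrium_def
  proof (intro conjI allI impI featXs featYs)
    fix X' assume "feasible T \<kappa> MX X'"
    then show "piWL T X' Ys \<le> piWL T Xs Ys"
      unfolding valXY unfolding piWL_def by (rule Lfun_mono[OF v0 alpha_Ys])
  next
    fix Y' assume "feasible T \<sigma> MY Y'"
    then show "1 - piWL T Xs Y' \<le> 1 - piWL T Xs Ys"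
      unfolding valXY unfolding piWL_def by (simp add: alpha_Xs)
  qed
  have uniq: "\<forall>t\<in>{1..T}. X t = Xs t \<and> Y t = Ys t"
    if E: "is_equilibrium T \<kappa> \<sigma> MX MY X Y" for X Y
  proof -
    have fX: "feasible T \<kappa> MX X" and fY: "feasible T \<sigma> MY Y"
      and hX: "\<And>X'. feasible T \<kappa> MX X' \<Longrightarrow> piWL T X' Y \<le> piWL T X Y"
      and hY: "\<And>Y'. feasible T \<sigma> MY Y' \<Longrightarrow> 1 - piWL T X Y' \<le> 1 - piWL T X Y"
      using E unfolding is_equilibrium_def by auto
    have Xnn: "\<And>t. t \<in> I \<Longrightarrow> X t \<ge> 0" and Xsum: "(\<Sum>t\<in>I. \<kappa> t * X t) = MX"
      using fX by (auto simp: feasible_def I_def)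
    have Ynn: "\<And>t. t \<in> I \<Longrightarrow> Y t \<ge> 0" and Ysum: "(\<Sum>t\<in>I. \<sigma> t * Y t) = MY"
      using fY by (auto simp: feasible_def I_def)
    have p1: "Lfun (ereal v) \<le> piWL T X Y"
      using hX[OF featXs] alpha_Xs[OF fY] by (simp add: piWL_def)
    have p2: "piWL T X Y \<le> piWL T X Ys" using hY[OF featYs] by simp
    have p3: "piWL T X Ys \<le> Lfun (ereal v)"
      unfolding piWL_def by (rule Lfun_mono[OF v0 alpha_Ys[OF fX]])
    have pv: "piWL T X Y = Lfun (ereal v)" using p1 p2 p3 by simp
    have hY': "\<And>Y'. feasible T \<sigma> MY Y' \<Longrightarrow> alpha T X Y' \<le> ereal v"
    proof -
      fix Y' assume f: "feasible T \<sigma> MY Y'"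
      have "Lfun (ereal v) \<le> Lfun (alpha T X Y')" using hY[OF f] pv by (simp add: piWL_def)
      then show "alpha T X Y' \<le> ereal v" using Lfun_strict[OF v0, of "alpha T X Y'"] by force
    qed
    have hX': "\<And>X'. feasible T \<kappa> MX X' \<Longrightarrow> alpha T X' Y \<ge> 0 \<Longrightarrow> ereal v \<le> alpha T X' Y"
    proof -
      fix X' assume f: "feasible T \<kappa> MX X'" and a0: "alpha T X' Y \<ge> 0"
      have "Lfun (alpha T X' Y) \<le> Lfun (ereal v)" using hX[OF f] pv by (simp add: piWL_def)
      then show "ereal v \<le> alpha T X' Y" using Lfun_strict[OF a0, of "ereal v"] by force
    qed
    have Xlow: "MX / r \<le> \<sigma> s * X s" if s: "s \<in> I" for s
    proof -
      define Y' where "Y' = (\<lambda>t. if t = s then MY / \<sigma> s else 0)"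
      have "(\<Sum>t\<in>I. \<sigma> t * Y' t) = (\<Sum>t\<in>I. if t = s then MY else 0)"
        by (rule sum.cong) (use spI[OF s] s in \<open>auto simp: Y'_def\<close>)
      also have "\<dots> = MY" using s finI by simp
      finally have fY': "feasible T \<sigma> MY Y'"
        unfolding feasible_def using MYp spI s by (auto simp: Y'_def I_def less_imp_le)
      have le: "alpha T X Y' \<le> ereal v" by (rule hY'[OF fY'])
      have Xs0: "X s \<noteq> 0"
      proof
        assume "X s = 0"
        then have "alpha T X Y' = \<infinity>"
          using alpha_inf[of T X Y' s] Xnn s MYp spI[OF s] by (auto simp: Y'_def I_def)
        then show False using le by simp
      qed
      have "alpha T X Y' = ereal (\<Sum>t\<in>I. Y' t / X t)"
        unfolding I_def by (rule alpha_fin) (use Xs0 in \<open>auto simp: Y'_def\<close>)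
      also have "(\<Sum>t\<in>I. Y' t / X t) = (\<Sum>t\<in>I. if t = s then MY / \<sigma> s / X s else 0)"
        by (rule sum.cong) (auto simp: Y'_def)
      also have "\<dots> = MY / \<sigma> s / X s" using s finI by simp
      finally have "MY / \<sigma> s / X s \<le> v" using le by simp
      moreover have "X s > 0" using Xs0 Xnn[OF s] by simp
      ultimately show ?thesis using spI[OF s] MXp MYp rp by (simp add: v_def field_simps)
    qed
    have Xeq: "X t = Xs t" if t: "t \<in> I" for t
    proof -
      have "(\<Sum>t\<in>I. (\<kappa> t/\<sigma> t) * (\<sigma> t * X t - MX / r))
          = (\<Sum>t\<in>I. \<kappa> t * X t - (MX/r) * (\<kappa> t/\<sigma> t))"
      proof (rule sum.cong)
        fix t assume t: "t \<in> I"
        show "(\<kappa> t/\<sigma> t) * (\<sigma> t * X t - MX / r) = \<kappa> t * X t - (MX/r) * (\<kappa> t/\<sigma> t)"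
          using spI[OF t] by (simp add: field_simps)
      qed simp
      also have "\<dots> = (\<Sum>t\<in>I. \<kappa> t * X t) - (MX/r) * (\<Sum>t\<in>I. \<kappa> t/\<sigma> t)"
        by (simp only: sum_subtractf sum_distrib_left[symmetric])
      also have "\<dots> = MX - (MX/r) * r" using Xsum rI by simp
      also have "\<dots> = 0" using Xsum rp by simp
      finally have z: "(\<Sum>t\<in>I. (\<kappa> t/\<sigma> t) * (\<sigma> t * X t - MX / r)) = 0" .
      have nn: "\<And>t. t \<in> I \<Longrightarrow> 0 \<le> (\<kappa> t/\<sigma> t) * (\<sigma> t * X t - MX / r)"
      proof -
        fix t assume t: "t \<in> I"
        have "0 \<le> \<kappa> t/\<sigma> t" using kpI[OF t] spI[OF t] by simp
        moreover have "0 \<le> \<sigma> t * X t - MX / r" using Xlow[OF t] by simp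
        ultimately show "0 \<le> (\<kappa> t/\<sigma> t) * (\<sigma> t * X t - MX / r)" by (rule mult_nonneg_nonneg)
      qed
      have "\<forall>t\<in>I. (\<kappa> t/\<sigma> t) * (\<sigma> t * X t - MX / r) = 0"
        using sum_nonneg_eq_0_iff[OF finI, of "\<lambda>t. (\<kappa> t/\<sigma> t) * (\<sigma> t * X t - MX / r)"] nn z by blast
      then have h: "\<sigma> t * X t = MX / r" using t kpI[OF t] spI[OF t] by force
      have "X t = (\<sigma> t * X t) / \<sigma> t" using spI[OF t] by simp
      also have "\<dots> = (MX/r) / \<sigma> t" using h by simp
      also have "\<dots> = MX / (\<sigma> t * r)" by (simp add: mult.commute)
      finally show ?thesis using Xs_eq[OF t] by simp
    qed
    define S where "S = (\<Sum>t\<in>I. sqrt (\<kappa> t * Y t))"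
    obtain s where s: "s \<in> I" "Y s > 0"
    proof (rule ccontr)
      assume "\<not> thesis"
      then have "\<forall>t\<in>I. Y t = 0" using that Ynn by (force simp: order_le_less)
      then have "(\<Sum>t\<in>I. \<sigma> t * Y t) = 0" by simp
      then show False using Ysum MYp by simp
    qed
    have Sp: "S > 0"
    proof -
      have "sqrt (\<kappa> s * Y s) \<le> S" unfolding S_def
        by (rule member_le_sum[OF s(1) _ finI]) (use kpI Ynn in \<open>fastforce intro: mult_nonneg_nonneg less_imp_le\<close>)
      moreover have "sqrt (\<kappa> s * Y s) > 0" using s kpI by simp
      ultimately show ?thesis by linarith
    qed
    define X' where "X' = (\<lambda>t. MX * sqrt (Y t / \<kappa> t) / S)"
    have fX': "feasible T \<kappa> MX X'"
    proof -
      have "(\<Sum>t\<in>I. \<kappa> t * X' t) = (\<Sum>t\<in>I. (MX/S) * sqrt (\<kappa> t * Y t))"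
        by (rule sum.cong) (auto simp: X'_def sqrt_k1[OF kpI, symmetric])
      also have "\<dots> = (MX/S) * S" by (simp only: sum_distrib_left[symmetric] S_def[symmetric])
      also have "\<dots> = MX" using Sp by simp
      finally show ?thesis unfolding feasible_def using MXp Sp Ynn kpI
        by (auto simp: X'_def I_def less_imp_le)
    qed
    have "alpha T X' Y = ereal (\<Sum>t\<in>I. Y t / X' t)"
      unfolding I_def
    proof (rule alpha_fin, intro ballI impI)
      fix t assume t: "t \<in> {1..T}" and y: "Y t \<noteq> 0"
      have "Y t > 0" using y Ynn[of t] t by (simp add: I_def)
      then have "sqrt (Y t / \<kappa> t) > 0" using kpI[of t] t by (simp add: I_def)
      then show "X' t \<noteq> 0" using MXp Sp by (auto simp: X'_def)
    qed
    also have "(\<Sum>t\<in>I. Y t / X' t) = (\<Sum>t\<in>I. (S/MX) * sqrt (\<kappa> t * Y t))"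
    proof (rule sum.cong)
      fix t assume t: "t \<in> I"
      have "Y t / X' t = (S/MX) * (Y t / sqrt (Y t / \<kappa> t))"
        by (simp add: X'_def)
      also have "\<dots> = (S/MX) * sqrt (\<kappa> t * Y t)" using sqrt_k2[OF kpI[OF t] Ynn[OF t]] by simp
      finally show "Y t / X' t = (S/MX) * sqrt (\<kappa> t * Y t)" .
    qed simp
    also have "\<dots> = (S/MX) * S" by (simp only: sum_distrib_left[symmetric] S_def[symmetric])
    also have "\<dots> = S * S / MX" by simp
    finally have aX': "alpha T X' Y = ereal (S * S / MX)" .
    have "ereal v \<le> alpha T X' Y" by (rule hX'[OF fX']) (use aX' Sp MXp in simp)
    then have vS: "MY * r \<le> S * S" using aX' MXp by (simp add: v_def field_simps)
    define c where "c = S / r"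
    have sqid: "(sqrt (\<sigma> t * Y t) - c * sqrt (\<kappa> t / \<sigma> t))^2
        = \<sigma> t * Y t - 2*c * sqrt (\<kappa> t * Y t) + c^2 * (\<kappa> t / \<sigma> t)" if t: "t \<in> I" for t
    proof -
      have a: "(sqrt (\<sigma> t * Y t))^2 = \<sigma> t * Y t" using spI[OF t] Ynn[OF t] by simp
      have b: "(sqrt (\<kappa> t / \<sigma> t))^2 = \<kappa> t / \<sigma> t" using spI[OF t] kpI[OF t] by simp
      have ab: "sqrt (\<sigma> t * Y t) * sqrt (\<kappa> t / \<sigma> t) = sqrt (\<kappa> t * Y t)"
        using spI[OF t] by (simp add: real_sqrt_mult[symmetric] field_simps)
      have g: "\<And>A B c :: real. (A - c*B)^2 = A^2 - 2*c*(A*B) + c^2*B^2"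
        by (simp add: power2_eq_square algebra_simps)
      show ?thesis unfolding g a b ab ..
    qed
    have "(\<Sum>t\<in>I. (sqrt (\<sigma> t * Y t) - c * sqrt (\<kappa> t / \<sigma> t))^2)
        = (\<Sum>t\<in>I. \<sigma> t * Y t - 2*c * sqrt (\<kappa> t * Y t) + c^2 * (\<kappa> t / \<sigma> t))"
      by (rule sum.cong) (simp_all add: sqid)
    also have "\<dots> = (\<Sum>t\<in>I. \<sigma> t * Y t) - (2*c) * (\<Sum>t\<in>I. sqrt (\<kappa> t * Y t)) + c^2 * (\<Sum>t\<in>I. \<kappa> t / \<sigma> t)"
      by (simp only: sum.distrib sum_subtractf sum_distrib_left[symmetric] mult.assoc)
    also have "\<dots> = MY - 2*c*S + c^2 * r"
      by (simp only: Ysum S_def[symmetric] rI[symmetric])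
    also have "\<dots> = MY - S*S/r" using rp by (simp add: c_def field_simps power2_eq_square)
    finally have sumq: "(\<Sum>t\<in>I. (sqrt (\<sigma> t * Y t) - c * sqrt (\<kappa> t / \<sigma> t))^2) = MY - S*S/r" .
    have "MY - S*S/r \<le> 0" using vS rp by (simp add: field_simps)
    moreover have "0 \<le> MY - S*S/r" unfolding sumq[symmetric] by (rule sum_nonneg) simp
    ultimately have sum0: "(\<Sum>t\<in>I. (sqrt (\<sigma> t * Y t) - c * sqrt (\<kappa> t / \<sigma> t))^2) = 0"
      and MYS: "MY = S*S/r" using sumq by simp_all
    have nnq: "\<And>t. t \<in> I \<Longrightarrow> 0 \<le> (sqrt (\<sigma> t * Y t) - c * sqrt (\<kappa> t / \<sigma> t))^2"
      by (rule zero_le_power2)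
    have "\<forall>t\<in>I. (sqrt (\<sigma> t * Y t) - c * sqrt (\<kappa> t / \<sigma> t))^2 = 0"
      using sum_nonneg_eq_0_iff[OF finI, of "\<lambda>t. (sqrt (\<sigma> t * Y t) - c * sqrt (\<kappa> t / \<sigma> t))^2", OF nnq] sum0
      by blast
    have Yeq: "Y t = Ys t" if t: "t \<in> I" for t
    proof -
      have "sqrt (\<sigma> t * Y t) = c * sqrt (\<kappa> t / \<sigma> t)"
        using \<open>\<forall>t\<in>I. _ = 0\<close> t by simp
      then have "(sqrt (\<sigma> t * Y t))^2 = c^2 * (sqrt (\<kappa> t / \<sigma> t))^2"
        by (simp add: power_mult_distrib)
      then have "\<sigma> t * Y t = c^2 * (\<kappa> t / \<sigma> t)" using spI[OF t] kpI[OF t] Ynn[OF t] by simp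
      then have "\<sigma> t * Y t = (MY / r) * (\<kappa> t / \<sigma> t)"
        using MYS rp by (simp add: c_def power2_eq_square)
      then have h: "\<sigma> t * Y t = (MY / r) * (\<kappa> t / \<sigma> t)" .
      have "Y t = (\<sigma> t * Y t) / \<sigma> t" using spI[OF t] by simp
      also have "\<dots> = (MY / r) * (\<kappa> t / \<sigma> t) / \<sigma> t" using h by simp
      also have "\<dots> = MY * \<kappa> t / (\<sigma> t * \<sigma> t * r)" by (simp add: mult.commute mult.left_commute)
      finally show ?thesis using Ys_eq[OF t] by simp
    qed
    show ?thesis using Xeq Yeq by (simp add: I_def)
  qed
  show ?thesis using eq1 uniq valXY by (simp add: v_def)
qed

end
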